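(* For any sample $(x,u)$, generative parameters $\theta$ and inference parameters $\phi$, the function $\alpha\mapsto \mathrm{ELBO}_{\theta,\phi}(\alpha;x,u)$ is concave on $[0,1]$. It is strictly concave on $[0,1]$ if and only if $q_\phi(z|x)\neq q_\phi(z|x,u)$ on a set of $z$ of positive Lebesgue measure.
   Context: Observations $x\in\mathbb{R}^{d_X}$, covariates $u\in\mathbb{R}^{d_U}$, latents $z\in\mathbb{R}^{d_Z}$, $d_Z<d_X$. Generative parameters $\theta=(f,T,\lambda)$: mixing function $f:\mathbb{R}^{d_Z}\to\mathbb{R}^{d_X}$, label prior density $p_{T,\lambda}(z|u)=\prod_{i=1}^{d_Z}\exp(\lambda_i(u)\cdot T_i(z_i)-A(u)+B(z_i))$ (conditionally factorial exponential family with known $A,B$), decoder density $p_f(x|z)=p_\epsilon(x-f(z))$ for a fixed noise density $p_\epsilon$. Inference parameters $\phi$ determine an encoder density $q_\phi(z|x)$ and a posterior density $q_\phi(z|x,u)$ on $\mathbb{R}^{d_Z}$. For $\alpha\in[0,1]$, with $m_\alpha=\alpha q_\phi(\cdot|x)+(1-\alpha)q_\phi(\cdot|x,u)$, $\mathrm{ELBO}_{\theta,\phi}(\alpha;x,u)=\mathbb{E}_{z\sim m_\alpha}\log p_f(x|z)-\mathcal{D}_{\mathrm{KL}}(m_\alpha\|p_{T,\lambda}(\cdot|u))$. All expectations and divergences appearing are assumed finite. *)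

theory Defs
  imports "HOL-Analysis.Analysis"
begin

definition strict_concave_on :: "'a::real_vector set \<Rightarrow> ('a \<Rightarrow> real) \<Rightarrow> bool" where
  "strict_concave_on S F \<longleftrightarrow> convex S \<and>
     (\<forall>a\<in>S. \<forall>b\<in>S. a \<noteq> b \<longrightarrow> (\<forall>t. 0 < t \<and> t < 1 \<longrightarrow>
        F ((1 - t) *\<^sub>R a + t *\<^sub>R b) > (1 - t) * F a + t * F b))"

definition label_prior ::
  "('z::finite \<Rightarrow> real \<Rightarrow> real^'k) \<Rightarrow> ('z \<Rightarrow> real^'u \<Rightarrow> real^'k)
   \<Rightarrow> (real^'u \<Rightarrow> real) \<Rightarrow> (real \<Rightarrow> real) \<Rightarrow> real^'u \<Rightarrow> real^'z \<Rightarrow> real" where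
  "label_prior T lam A B u z =
     (\<Prod>i\<in>UNIV. exp (lam i u \<bullet> T i (z $ i) - A u + B (z $ i)))"

definition decoder :: "(real^'x \<Rightarrow> real) \<Rightarrow> (real^'z \<Rightarrow> real^'x) \<Rightarrow> real^'x \<Rightarrow> real^'z \<Rightarrow> real" where
  "decoder p_eps f x z = p_eps (x - f z)"

definition mixture :: "real \<Rightarrow> ('a \<Rightarrow> real) \<Rightarrow> ('a \<Rightarrow> real) \<Rightarrow> 'a \<Rightarrow> real" where
  "mixture \<alpha> q1 q2 z = \<alpha> * q1 z + (1 - \<alpha>) * q2 z"

definition expect_dens :: "('a::euclidean_space \<Rightarrow> real) \<Rightarrow> ('a \<Rightarrow> real) \<Rightarrow> real" where
  "expect_dens m g = (\<integral>z. m z * g z \<partial>lborel)"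

definition kl_integrand :: "('a \<Rightarrow> real) \<Rightarrow> ('a \<Rightarrow> real) \<Rightarrow> 'a \<Rightarrow> real" where
  "kl_integrand m p z = (if m z = 0 then 0 else m z * ln (m z / p z))"

definition kl_dens :: "('a::euclidean_space \<Rightarrow> real) \<Rightarrow> ('a \<Rightarrow> real) \<Rightarrow> real" where
  "kl_dens m p = (\<integral>z. kl_integrand m p z \<partial>lborel)"

definition ELBO ::
  "(real^'x \<Rightarrow> real) \<Rightarrow> (real^'z::finite \<Rightarrow> real^'x) \<Rightarrow> ('z \<Rightarrow> real \<Rightarrow> real^'k)
   \<Rightarrow> ('z \<Rightarrow> real^'u \<Rightarrow> real^'k) \<Rightarrow> (real^'u \<Rightarrow> real) \<Rightarrow> (real \<Rightarrow> real)
   \<Rightarrow> (real^'x \<Rightarrow> real^'z \<Rightarrow> real) \<Rightarrow> (real^'x \<Rightarrow> real^'u \<Rightarrow> real^'z \<Rightarrow> real)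
   \<Rightarrow> real \<Rightarrow> real^'x \<Rightarrow> real^'u \<Rightarrow> real" where
  "ELBO p_eps f T lam A B qenc qpost \<alpha> x u =
     expect_dens (mixture \<alpha> (qenc x) (qpost x u)) (\<lambda>z. ln (decoder p_eps f x z))
     - kl_dens (mixture \<alpha> (qenc x) (qpost x u)) (label_prior T lam A B u)"

end

theory Submission
  imports Defs
begin

lemma ln_strict: fixes x::real assumes "0 < x" "x \<noteq> 1" shows "ln x < x - 1"
proof -
  have s: "sqrt x > 0" using assms by simp
  have "ln x = 2 * ln (sqrt x)" using assms by (simp add: ln_sqrt)
  also have "\<dots> \<le> 2 * (sqrt x - 1)" using ln_le_minus_one[OF s] by simp
  also have "\<dots> < x - 1"
  proof -
    have "sqrt x \<noteq> 1" using assms by simp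
    hence "(sqrt x - 1)^2 > 0" by simp
    thus ?thesis using assms by (simp add: power2_eq_square algebra_simps)
  qed
  finally show ?thesis .
qed

lemma g_bound: fixes s m :: real assumes "s \<ge> 0" "m > 0"
  shows "(if s = 0 then 0 else s * ln (s / m)) \<ge> s - m"
    and "s \<noteq> m \<Longrightarrow> (if s = 0 then 0 else s * ln (s / m)) > s - m"
proof -
  { assume s0: "s > 0"
    have "ln (m / s) \<le> m / s - 1" using ln_le_minus_one s0 assms by simp
    hence "s * ln (m/s) \<le> m - s" using s0 by (simp add: field_simps)
    moreover have "ln (s/m) = - ln (m/s)" using s0 assms by (simp add: ln_div)
    ultimately have "s * ln (s/m) \<ge> s - m" by simp }
  thus "(if s = 0 then 0 else s * ln (s / m)) \<ge> s - m" using assms by auto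
  assume ne: "s \<noteq> m"
  { assume s0: "s > 0"
    have "ln (m / s) < m / s - 1" using ln_strict s0 assms ne by simp
    hence "s * ln (m/s) < m - s" using s0 by (simp add: field_simps)
    moreover have "ln (s/m) = - ln (m/s)" using s0 assms by (simp add: ln_div)
    ultimately have "s * ln (s/m) > s - m" by simp }
  thus "(if s = 0 then 0 else s * ln (s / m)) > s - m" using assms by auto
qed

definition klf :: "real \<Rightarrow> real \<Rightarrow> real" where
  "klf p s = (if s = 0 then 0 else s * ln (s / p))"

lemma klf_split: assumes "s \<ge> 0" "m > 0" "p > 0"
  shows "klf p s = (if s = 0 then 0 else s * ln (s / m)) + s * ln (m / p)"
  using assms by (auto simp: klf_def ln_div algebra_simps)

lemma klf_convex:
  fixes a b p t :: real
  assumes a: "a \<ge> 0" and b: "b \<ge> 0" and p: "p > 0" and t: "0 \<le> t" "t \<le> 1"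
  shows "klf p ((1-t)*a + t*b) \<le> (1-t) * klf p a + t * klf p b"
    and "a \<noteq> b \<Longrightarrow> 0 < t \<Longrightarrow> t < 1 \<Longrightarrow>
         klf p ((1-t)*a + t*b) < (1-t) * klf p a + t * klf p b"
proof -
  define m where "m = (1-t)*a + t*b"
  have m0: "m \<ge> 0" using a b t by (simp add: m_def)
  define g where "g s = (if s = 0 then 0 else s * ln (s / m))" for s
  have main: "m > 0 \<Longrightarrow> (1-t) * klf p a + t * klf p b - klf p m = (1-t) * g a + t * g b"
  proof -
    assume "m > 0"
    hence "klf p a = g a + a * ln (m/p)" "klf p b = g b + b * ln (m/p)" "klf p m = g m + m * ln (m/p)"
      using klf_split[OF _ \<open>m>0\<close> p] a b m0 unfolding g_def by auto
    moreover have "g m = 0" using \<open>m>0\<close> by (simp add: g_def)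
    ultimately show ?thesis by (simp add: m_def algebra_simps)
  qed
  have lin: "(1-t)*(a - m) + t*(b - m) = 0" by (simp add: m_def algebra_simps)
  show "klf p ((1-t)*a + t*b) \<le> (1-t) * klf p a + t * klf p b"
  proof (cases "m > 0")
    case True
    have "(1-t) * (a - m) \<le> (1-t) * g a" using g_bound(1)[OF a True] t unfolding g_def
      by (intro mult_left_mono) auto
    moreover have "t * (b - m) \<le> t * g b" using g_bound(1)[OF b True] t unfolding g_def
      by (intro mult_left_mono) auto
    ultimately show ?thesis using main[OF True] lin by (simp add: m_def)
  next
    case False
    hence "m = 0" using m0 by simp
    hence "(1-t)*a = 0" "t*b = 0" using a b t unfolding m_def
      by (smt (verit) mult_nonneg_nonneg)+
    thus ?thesis using \<open>m = 0\<close> unfolding m_def klf_def by auto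
  qed
  assume ne: "a \<noteq> b" and t0: "0 < t" "t < 1"
  have "m > 0"
  proof (rule ccontr)
    assume "\<not> m > 0"
    hence "m = 0" using m0 by simp
    hence "(1-t)*a = 0" "t*b = 0" using a b t unfolding m_def
      by (smt (verit) mult_nonneg_nonneg)+
    thus False using t0 ne by simp
  qed
  have am: "a \<noteq> m"
  proof
    assume "a = m"
    have "t * (b - a) = m - a" by (simp add: m_def algebra_simps)
    hence "t * (b - a) = 0" using \<open>a = m\<close> by simp
    thus False using t0 ne by auto
  qed
  have "(1-t) * (a - m) < (1-t) * g a" using g_bound(2)[OF a \<open>m>0\<close> am] t0 unfolding g_def
    by (intro mult_strict_left_mono) auto
  moreover have "t * (b - m) \<le> t * g b" using g_bound(1)[OF b \<open>m>0\<close>] t unfolding g_def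
    by (intro mult_left_mono) auto
  ultimately show "klf p ((1-t)*a + t*b) < (1-t) * klf p a + t * klf p b"
    using main[OF \<open>m>0\<close>] lin by (simp add: m_def)
qed

theorem proposition6:
  fixes p_eps :: "real^'x \<Rightarrow> real"
    and f :: "real^'z \<Rightarrow> real^'x"
    and T :: "'z \<Rightarrow> real \<Rightarrow> real^'k"
    and lam :: "'z \<Rightarrow> real^'u \<Rightarrow> real^'k"
    and A :: "real^'u \<Rightarrow> real"
    and B :: "real \<Rightarrow> real"
    and qenc :: "'phi \<Rightarrow> real^'x \<Rightarrow> real^'z \<Rightarrow> real"
    and qpost :: "'phi \<Rightarrow> real^'x \<Rightarrow> real^'u \<Rightarrow> real^'z \<Rightarrow> real"
    and \<phi> :: 'phi
    and x :: "real^'x" and u :: "real^'u"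
  assumes dim: "CARD('z) < CARD('x)"
    (* p_eps is a probability density on R^{d_X} *)
    and eps_meas: "p_eps \<in> borel_measurable lborel"
    and eps_nonneg: "\<And>y. p_eps y \<ge> 0"
    and eps_int: "integrable lborel p_eps" and eps_one: "(\<integral>y. p_eps y \<partial>lborel) = 1"
    (* the label prior is a probability density on R^{d_Z} for every u *)
    and prior_meas: "\<And>u'. label_prior T lam A B u' \<in> borel_measurable lborel"
    and prior_int: "\<And>u'. integrable lborel (label_prior T lam A B u')"
    and prior_one: "\<And>u'. (\<integral>z. label_prior T lam A B u' z \<partial>lborel) = 1"
    (* encoder q_phi(z|x) and posterior q_phi(z|x,u) are probability densities *)
    and enc_meas: "\<And>x'. qenc \<phi> x' \<in> borel_measurable lborel"
    and enc_nonneg: "\<And>x' z. qenc \<phi> x' z \<ge> 0"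
    and enc_int: "\<And>x'. integrable lborel (qenc \<phi> x')"
    and enc_one: "\<And>x'. (\<integral>z. qenc \<phi> x' z \<partial>lborel) = 1"
    and post_meas: "\<And>x' u'. qpost \<phi> x' u' \<in> borel_measurable lborel"
    and post_nonneg: "\<And>x' u' z. qpost \<phi> x' u' z \<ge> 0"
    and post_int: "\<And>x' u'. integrable lborel (qpost \<phi> x' u')"
    and post_one: "\<And>x' u'. (\<integral>z. qpost \<phi> x' u' z \<partial>lborel) = 1"
    (* all expectations and divergences appearing are finite *)
    and fin_exp: "\<And>\<alpha>. \<alpha> \<in> {0..1} \<Longrightarrow>
       integrable lborel (\<lambda>z. mixture \<alpha> (qenc \<phi> x) (qpost \<phi> x u) z * ln (decoder p_eps f x z))"
    and fin_kl: "\<And>\<alpha>. \<alpha> \<in> {0..1} \<Longrightarrow>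
       integrable lborel (kl_integrand (mixture \<alpha> (qenc \<phi> x) (qpost \<phi> x u)) (label_prior T lam A B u))"
  shows "concave_on {0..1} (\<lambda>\<alpha>. ELBO p_eps f T lam A B (qenc \<phi>) (qpost \<phi>) \<alpha> x u)
    \<and> (strict_concave_on {0..1} (\<lambda>\<alpha>. ELBO p_eps f T lam A B (qenc \<phi>) (qpost \<phi>) \<alpha> x u)
        \<longleftrightarrow> emeasure lborel {z. qenc \<phi> x z \<noteq> qpost \<phi> x u z} > 0)"
proof -
  define q1 where "q1 = qenc \<phi> x"
  define q2 where "q2 = qpost \<phi> x u"
  define p where "p = label_prior T lam A B u"
  define L where "L z = ln (decoder p_eps f x z)" for z
  define M where "M a = mixture a q1 q2" for a
  define E where "E a = (\<integral>z. M a z * L z \<partial>lborel)" for a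
  define K where "K a = (\<integral>z. klf (p z) (M a z) \<partial>lborel)" for a
  have ppos: "p z > 0" for z unfolding p_def label_prior_def by (intro prod_pos) auto
  have klK: "kl_integrand (M a) p = (\<lambda>z. klf (p z) (M a z))" for a
    by (auto simp: kl_integrand_def klf_def)
  have ELBO_eq: "ELBO p_eps f T lam A B (qenc \<phi>) (qpost \<phi>) a x u = E a - K a" for a
    unfolding ELBO_def E_def K_def expect_dens_def kl_dens_def klK[symmetric]
    by (simp add: M_def q1_def q2_def p_def L_def)
  have Mnn: "a \<in> {0..1} \<Longrightarrow> M a z \<ge> 0" for a z
    unfolding M_def mixture_def q1_def q2_def using enc_nonneg post_nonneg
    by (auto intro!: add_nonneg_nonneg mult_nonneg_nonneg)
  have Mcomb: "M ((1-t)*a + t*b) z = (1-t) * M a z + t * M b z" for a b t z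
    by (simp add: M_def mixture_def algebra_simps)
  have M1: "M 1 = q1" and M0: "M 0 = q2" by (auto simp: M_def mixture_def)
  have intE: "integrable lborel (\<lambda>z. M a z * L z)" if "a \<in> {0..1}" for a
    using fin_exp[OF that] by (simp add: M_def q1_def q2_def L_def)
  have intK: "integrable lborel (\<lambda>z. klf (p z) (M a z))" if "a \<in> {0..1}" for a
    using fin_kl[OF that] klK[of a] by (simp add: M_def q1_def q2_def p_def)
  have Elin: "E a = a * E 1 + (1-a) * E 0" if "a \<in> {0..1}" for a
  proof -
    have "E a = (\<integral>z. a * (q1 z * L z) + (1-a) * (q2 z * L z) \<partial>lborel)"
      unfolding E_def by (intro Bochner_Integration.integral_cong) (auto simp: M_def mixture_def algebra_simps)
    also have "\<dots> = a * (\<integral>z. q1 z * L z \<partial>lborel) + (1-a) * (\<integral>z. q2 z * L z \<partial>lborel)"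
    proof -
      have i1: "integrable lborel (\<lambda>z. q1 z * L z)" using intE[of 1] unfolding M1 by simp
      have i2: "integrable lborel (\<lambda>z. q2 z * L z)" using intE[of 0] unfolding M0 by simp
      show ?thesis
        using Bochner_Integration.integral_add[OF integrable_mult_right[OF i1, of a] integrable_mult_right[OF i2, of "1-a"]]
        by simp
    qed
    also have "\<dots> = a * E 1 + (1-a) * E 0" unfolding E_def M1 M0 ..
    finally show ?thesis .
  qed
  have cin: "(1-t)*a + t*b \<in> {0..1}"
    if "a \<in> {0..1}" "b \<in> {0..1}" "0 \<le> t" "t \<le> 1" for a b t :: real
  proof -
    have "(1-t)*a \<le> (1-t)" using that by (intro mult_left_le) auto
    moreover have "t*b \<le> t" using that by (intro mult_left_le) auto
    moreover have "(1-t)*a \<ge> 0" "t*b \<ge> 0" using that by auto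
    ultimately show ?thesis by simp
  qed
  have Ecomb: "E ((1-t)*a + t*b) = (1-t) * E a + t * E b"
    if "a \<in> {0..1}" "b \<in> {0..1}" "0 \<le> t" "t \<le> 1" for a b t
  proof -
    have "(1-t)*a + t*b \<in> {0..1}" by (rule cin[OF that])
    hence X: "E ((1-t)*a + t*b) = ((1-t)*a + t*b) * E 1 + (1 - ((1-t)*a + t*b)) * E 0" by (rule Elin)
    have Y: "E a = a * E 1 + (1-a) * E 0" by (rule Elin[OF that(1)])
    have Z: "E b = b * E 1 + (1-b) * E 0" by (rule Elin[OF that(2)])
    show ?thesis unfolding X Y Z by (simp add: algebra_simps)
  qed
  have Kdiff: "(1-t) * K a + t * K b - K ((1-t)*a + t*b)
      = (\<integral>z. (1-t) * klf (p z) (M a z) + t * klf (p z) (M b z) - klf (p z) (M ((1-t)*a + t*b) z) \<partial>lborel)"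
    and intD: "integrable lborel (\<lambda>z. (1-t) * klf (p z) (M a z) + t * klf (p z) (M b z) - klf (p z) (M ((1-t)*a + t*b) z))"
    and Dnn: "\<And>z. (1-t) * klf (p z) (M a z) + t * klf (p z) (M b z) - klf (p z) (M ((1-t)*a + t*b) z) \<ge> 0"
    if ab: "a \<in> {0..1}" "b \<in> {0..1}" "0 \<le> t" "t \<le> 1" for a b t
  proof -
    show "integrable lborel (\<lambda>z. (1-t) * klf (p z) (M a z) + t * klf (p z) (M b z) - klf (p z) (M ((1-t)*a + t*b) z))"
      using intK[OF ab(1)] intK[OF ab(2)] intK[OF cin[OF ab]] by auto
    show "(1-t) * K a + t * K b - K ((1-t)*a + t*b)
      = (\<integral>z. (1-t) * klf (p z) (M a z) + t * klf (p z) (M b z) - klf (p z) (M ((1-t)*a + t*b) z) \<partial>lborel)"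
      using intK[OF ab(1)] intK[OF ab(2)] intK[OF cin[OF ab]] unfolding K_def by simp
    fix z
    show "(1-t) * klf (p z) (M a z) + t * klf (p z) (M b z) - klf (p z) (M ((1-t)*a + t*b) z) \<ge> 0"
      using klf_convex(1)[OF Mnn[OF ab(1)] Mnn[OF ab(2)] ppos ab(3,4)] Mcomb by simp
  qed
  have meas: "{z. q1 z \<noteq> q2 z} \<in> sets lborel"
  proof -
    have "q1 \<in> borel_measurable lborel" "q2 \<in> borel_measurable lborel"
      using enc_meas post_meas by (auto simp: q1_def q2_def)
    thus ?thesis by measurable
  qed
  have conc: "concave_on {0..1} (\<lambda>a. E a - K a)"
    unfolding concave_on_iff
  proof (intro conjI ballI allI impI)
    show "convex {0..1::real}" by (simp add: convex_real_interval)
    fix a b :: real and v w :: real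
    assume ab: "a \<in> {0..1}" "b \<in> {0..1}" and vw: "0 \<le> v" "0 \<le> w" "v + w = 1"
    hence t: "0 \<le> w" "w \<le> 1" and v: "v = 1 - w" by auto
    have "(1-w) * K a + w * K b - K ((1-w)*a + w*b) \<ge> 0"
      using Kdiff[OF ab t] intD[OF ab t] Dnn[OF ab t] by (simp add: integral_nonneg_AE)
    thus "v * (E a - K a) + w * (E b - K b) \<le> E (v *\<^sub>R a + w *\<^sub>R b) - K (v *\<^sub>R a + w *\<^sub>R b)"
      using Ecomb[OF ab t] unfolding v by (simp add: algebra_simps)
  qed
  have strict_iff: "strict_concave_on {0..1} (\<lambda>a. E a - K a) \<longleftrightarrow> emeasure lborel {z. q1 z \<noteq> q2 z} > 0"
  proof
    assume sc: "strict_concave_on {0..1} (\<lambda>a. E a - K a)"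
    show "emeasure lborel {z. q1 z \<noteq> q2 z} > 0"
    proof (rule ccontr)
      assume "\<not> ?thesis"
      hence "emeasure lborel {z. q1 z \<noteq> q2 z} = 0" by (simp add: zero_less_iff_neq_zero)
      hence ae: "AE z in lborel. q1 z = q2 z"
        using AE_iff_measurable[OF meas, of "\<lambda>z. q1 z = q2 z"] by simp
      have Mae: "AE z in lborel. M a z = q2 z" for a
        using ae by eventually_elim (simp add: M_def mixture_def algebra_simps)
      have Econst: "E a = E 0" if "a \<in> {0..1}" for a
        unfolding E_def using intE[OF that] intE[of 0] Mae[of a]
        by (intro integral_cong_AE) (auto simp: M0)
      have Kconst: "K a = K 0" if "a \<in> {0..1}" for a
        unfolding K_def using intK[OF that] intK[of 0] Mae[of a]
        by (intro integral_cong_AE) (auto simp: M0)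
      have "\<forall>a\<in>{0..1}. \<forall>b\<in>{0..1}. a \<noteq> b \<longrightarrow> (\<forall>t. 0 < t \<and> t < 1 \<longrightarrow>
          (E ((1 - t) *\<^sub>R a + t *\<^sub>R b) - K ((1 - t) *\<^sub>R a + t *\<^sub>R b)) > (1 - t) * (E a - K a) + t * (E b - K b))"
        using sc unfolding strict_concave_on_def by blast
      from this[rule_format, of 0 1 "1/2"]
      have "(1 - 1/2) * (E 0 - K 0) + 1/2 * (E 1 - K 1) < E (1/2) - K (1/2)" by simp
      thus False using Econst[of 1] Kconst[of 1] Econst[of "1/2"] Kconst[of "1/2"] by simp
    qed
  next
    assume pos: "emeasure lborel {z. q1 z \<noteq> q2 z} > 0"
    show "strict_concave_on {0..1} (\<lambda>a. E a - K a)"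
      unfolding strict_concave_on_def
    proof (intro conjI ballI allI impI)
      show "convex {0..1::real}" by (simp add: convex_real_interval)
      fix a b t :: real
      assume ab: "a \<in> {0..1}" "b \<in> {0..1}" and ne: "a \<noteq> b" and t: "0 < t \<and> t < 1"
      hence t': "0 \<le> t" "t \<le> 1" by auto
      have "(1-t) * K a + t * K b - K ((1-t)*a + t*b) \<noteq> 0"
      proof
        assume "(1-t) * K a + t * K b - K ((1-t)*a + t*b) = 0"
        hence "AE z in lborel. (1-t) * klf (p z) (M a z) + t * klf (p z) (M b z) - klf (p z) (M ((1-t)*a + t*b) z) = 0"
          using Kdiff[OF ab t'] integral_nonneg_eq_0_iff_AE[OF intD[OF ab t']] Dnn[OF ab t'] by simp
        hence "AE z in lborel. q1 z = q2 z"
        proof eventually_elim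
          case (elim z)
          show ?case
          proof (rule ccontr)
            assume "q1 z \<noteq> q2 z"
            moreover have "M a z - M b z = (a-b)*(q1 z - q2 z)"
              by (simp add: M_def mixture_def algebra_simps)
            ultimately have "M a z \<noteq> M b z" using ne by auto
            from klf_convex(2)[OF Mnn[OF ab(1)] Mnn[OF ab(2)] ppos[of z] t' this] t elim Mcomb
            show False by simp
          qed
        qed
        hence "emeasure lborel {z. q1 z \<noteq> q2 z} = 0"
          using AE_iff_measurable[OF meas, of "\<lambda>z. q1 z = q2 z"] by simp
        thus False using pos by simp
      qed
      hence "(1-t) * K a + t * K b - K ((1-t)*a + t*b) > 0"
        using Kdiff[OF ab t'] intD[OF ab t'] Dnn[OF ab t'] by (simp add: integral_nonneg_AE order_less_le)
      thus "(1 - t) * (E a - K a) + t * (E b - K b) < E ((1 - t) *\<^sub>R a + t *\<^sub>R b) - K ((1 - t) *\<^sub>R a + t *\<^sub>R b)"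
        using Ecomb[OF ab t'] by (simp add: algebra_simps)
    qed
  qed
  show ?thesis unfolding ELBO_eq using conc strict_iff by (simp add: q1_def q2_def)
qed

end
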